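(* Let $G=\mathrm{GL}_n$ with diagonal torus $A$, let $M=M_{(m_1,\dots,m_r)}$ be a standard (block diagonal) Levi subgroup, let $\mu\in X_*(A)_{\mathrm{dom}}$ be minuscule and let $x\in\pi_1(M)$. The following are equivalent: (i) $x\in\kappa_M(W\mu)$; (ii) the unique $\nu\in X_M\otimes\mathbf Q$ mapping to $x$ under $\kappa_M\otimes\mathbf Q$ lies in $\mathrm{Conv}(W\mu)$. Moreover, if $x$ satisfies these conditions and $\tilde\nu\in X_*(A)$ is the unique $M$-dominant $M$-minuscule element with $\kappa_M(\tilde\nu)=x$, then $\tilde\nu\in W\mu$.
   Context: $X_*(A)=\mathbf Z^n$, $W=S_n$ acting by permutations; dominant means non-increasing entries. $\mu$ is minuscule if $\langle\mu,\alpha\rangle\in\{0,\pm1\}$ for all roots $\alpha$ (i.e. $\mu_1-\mu_n\le1$). $\pi_1(M)=X_*(A)/(\text{coroot lattice of }M)\cong\mathbf Z^r$ (block sums), $\kappa_M$ the projection $X_*(A)\to\pi_1(M)$. $A_M$ is the maximal split torus in the center of $M$, $X_M=X_*(A_M)$ (vectors constant on blocks); $\kappa_M\otimes\mathbf Q$ restricts to an isomorphism $X_M\otimes\mathbf Q\to\pi_1(M)\otimes\mathbf Q$. $\mathrm{Conv}$ denotes convex hull in $\mathbf R^n$. $M$-dominant means non-increasing within each block; $M$-minuscule means $\langle\tilde\nu,\alpha\rangle\in\{0,\pm1\}$ for all roots $\alpha$ of $M$. Each element of $\pi_1(M)$ is the image of a unique $M$-dominant $M$-minuscule element. *)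

theory Defs
  imports "HOL-Analysis.Analysis"
begin

text \<open>Cocharacters of the diagonal torus of GL_n: vectors in Z^n, modelled as
  functions nat => int vanishing outside {..<n}.  The standard Levi
  M = M_(m_0,...,m_(r-1)) is given by block sizes m j (j < r) with sum n;
  block j is the index interval blk m j.\<close>

definition vec :: "nat \<Rightarrow> (nat \<Rightarrow> 'a::zero) set" where
  "vec n = {v. \<forall>i. n \<le> i \<longrightarrow> v i = 0}"

definition blk :: "(nat \<Rightarrow> nat) \<Rightarrow> nat \<Rightarrow> nat set" where
  "blk m j = {(\<Sum>k<j. m k) ..< (\<Sum>k<Suc j. m k)}"

definition Worb :: "nat \<Rightarrow> (nat \<Rightarrow> int) \<Rightarrow> (nat \<Rightarrow> int) set" where
  "Worb n \<mu> = {\<mu> \<circ> \<sigma> | \<sigma>. \<sigma> permutes {..<n}}"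

definition dominant :: "nat \<Rightarrow> (nat \<Rightarrow> int) \<Rightarrow> bool" where
  "dominant n \<mu> \<longleftrightarrow> (\<forall>i j. i \<le> j \<and> j < n \<longrightarrow> \<mu> j \<le> \<mu> i)"

text \<open>minuscule: <mu, alpha> in {0,1,-1} for all roots alpha = e_i - e_j (i \<noteq> j).\<close>
definition minuscule :: "nat \<Rightarrow> (nat \<Rightarrow> int) \<Rightarrow> bool" where
  "minuscule n \<mu> \<longleftrightarrow> (\<forall>i j. i < n \<and> j < n \<and> i \<noteq> j \<longrightarrow> \<mu> i - \<mu> j \<in> {0, 1, -1})"

text \<open>kappa_M : X_*(A) -> pi_1(M) = Z^r (block sums); also used for its
  rationalisation (real coefficients).\<close>
definition kappaM :: "(nat \<Rightarrow> nat) \<Rightarrow> nat \<Rightarrow> (nat \<Rightarrow> 'a::comm_monoid_add) \<Rightarrow> nat \<Rightarrow> 'a" where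
  "kappaM m r v = (\<lambda>j. if j < r then (\<Sum>i\<in>blk m j. v i) else 0)"

definition M_dominant :: "(nat \<Rightarrow> nat) \<Rightarrow> nat \<Rightarrow> (nat \<Rightarrow> int) \<Rightarrow> bool" where
  "M_dominant m r v \<longleftrightarrow>
     (\<forall>j<r. \<forall>i\<in>blk m j. \<forall>i'\<in>blk m j. i \<le> i' \<longrightarrow> v i' \<le> v i)"

definition M_minuscule :: "(nat \<Rightarrow> nat) \<Rightarrow> nat \<Rightarrow> (nat \<Rightarrow> int) \<Rightarrow> bool" where
  "M_minuscule m r v \<longleftrightarrow>
     (\<forall>j<r. \<forall>i\<in>blk m j. \<forall>i'\<in>blk m j. i \<noteq> i' \<longrightarrow> v i - v i' \<in> {0, 1, -1})"

text \<open>X_M tensor Q, viewed inside R^n: vectors constant on each block.\<close>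
definition XM_Q :: "(nat \<Rightarrow> nat) \<Rightarrow> nat \<Rightarrow> nat \<Rightarrow> (nat \<Rightarrow> real) set" where
  "XM_Q m r n = {\<nu> \<in> vec n. (\<forall>i. \<nu> i \<in> \<rat>) \<and>
      (\<forall>j<r. \<forall>i\<in>blk m j. \<forall>i'\<in>blk m j. \<nu> i = \<nu> i')}"

definition Conv :: "(nat \<Rightarrow> real) set \<Rightarrow> (nat \<Rightarrow> real) set" where
  "Conv S = {v. \<exists>F c. finite F \<and> F \<subseteq> S \<and> (\<forall>s\<in>F. 0 \<le> c s) \<and> sum c F = 1 \<and>
                      v = (\<lambda>i. \<Sum>s\<in>F. c s * s i)}"

definition to_real :: "(nat \<Rightarrow> int) \<Rightarrow> nat \<Rightarrow> real" where
  "to_real v = (\<lambda>i. real_of_int (v i))"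

end

theory Submission
  imports Defs
begin


lemma blk_eq: "blk m j = {sum m {..<j} ..< sum m {..<j} + m j}"
  by (simp add: blk_def)

lemma card_blk: "card (blk m j) = m j"
  by (simp add: blk_eq)

lemma st_mono: "(j::nat) \<le> j' \<Longrightarrow> sum m {..<j} \<le> (sum m {..<j'} :: nat)"
  using sum_mono2[of "{..<j'}" "{..<j}" m] by auto

lemma blk_disj: assumes "j \<noteq> j'" shows "blk m j \<inter> blk m j' = {}"
proof -
  { fix j j' :: nat assume "j < j'"
    then have "sum m {..<Suc j} \<le> sum m {..<j'}" by (intro st_mono) auto
    then have "blk m j \<inter> blk m j' = {}" by (auto simp: blk_eq) }
  with assms show ?thesis
    by (metis inf_commute linorder_neqE_nat)
qed

lemma blk_sub: "j < r \<Longrightarrow> blk m j \<subseteq> {..<sum m {..<r}}"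
proof -
  assume "j < r"
  then have "sum m {..<Suc j} \<le> sum m {..<r}" by (intro st_mono) auto
  then show ?thesis by (auto simp: blk_eq)
qed

lemma sum_blocks: "sum f {..<sum m {..<r}} = (\<Sum>j<r. sum f (blk m j))"
proof (induction r)
  case 0 then show ?case by simp
next
  case (Suc r)
  have "sum f {..<sum m {..<Suc r}} = sum f {0..<sum m {..<r}} + sum f {sum m {..<r}..<sum m {..<r} + m r}"
    by (simp add: sum.atLeastLessThan_concat lessThan_atLeast0)
  also have "\<dots> = (\<Sum>j<r. sum f (blk m j)) + sum f (blk m r)"
    using Suc by (simp add: blk_eq lessThan_atLeast0)
  finally show ?case by simp
qed

lemma in_some_blk: "i < sum m {..<r} \<Longrightarrow> \<exists>j<r. i \<in> blk m j"
proof (induction r)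
  case 0 then show ?case by simp
next
  case (Suc r)
  show ?case
  proof (cases "i < sum m {..<r}")
    case True then show ?thesis using Suc by (meson less_SucI)
  next
    case False then have "i \<in> blk m r" using Suc.prems by (auto simp: blk_eq)
    then show ?thesis by blast
  qed
qed

lemma blk_delta:
  assumes "i \<in> blk m j0" "j0 < r"
  shows "(\<Sum>j<r. if i \<in> blk m j then g j else 0) = g j0"
proof -
  have "\<And>j. j < r \<Longrightarrow> (i \<in> blk m j) = (j = j0)"
    using assms blk_disj by blast
  then have "(\<Sum>j<r. if i \<in> blk m j then g j else 0) = (\<Sum>j<r. if j = j0 then g j else 0)"
    by (intro sum.cong) auto
  also have "\<dots> = g j0" using assms by simp
  finally show ?thesis .
qed

lemma blk_none:
  assumes "sum m {..<r} \<le> i"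
  shows "(\<Sum>j<r. if i \<in> blk m j then g j else 0) = 0"
proof -
  have "\<And>j. j < r \<Longrightarrow> i \<notin> blk m j" using assms blk_sub by fastforce
  then show ?thesis by (intro sum.neutral) auto
qed

lemma bij_mod: "0 < m \<Longrightarrow> bij_betw (\<lambda>s. (c + s) mod m) {..<(m::nat)} {..<m}"
proof -
  assume m: "0 < m"
  have inj: "inj_on (\<lambda>s. (c + s) mod m) {..<m}"
  proof
    fix s s' assume "s \<in> {..<m}" "s' \<in> {..<m}" "(c + s) mod m = (c + s') mod m"
    then obtain q1 q2 where "c + s + m * q1 = c + s' + m * q2" and lt: "s < m" "s' < m"
      by (auto simp: nat_mod_eq_iff)
    then have "s + m * q1 = s' + m * q2" by simp
    then have "s mod m = s' mod m" by (auto simp: nat_mod_eq_iff)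
    then show "s = s'" using lt by simp
  qed
  have "(\<lambda>s. (c + s) mod m) ` {..<m} \<subseteq> {..<m}" using m by auto
  then show ?thesis using inj
    by (simp add: bij_betw_def endo_inj_surj)
qed

lemma count_mod:
  assumes "0 < m" "k \<le> m"
  shows "(\<Sum>s<m. if (c + s) mod m < k then 1 else 0) = (k::nat)"
proof -
  have "(\<Sum>s<m. if (c + s) mod m < k then 1 else 0) = (\<Sum>u<m. if u < k then 1 else (0::nat))"
    using sum.reindex_bij_betw[OF bij_mod[OF assms(1), of c], of "\<lambda>u. if u < k then 1 else 0"]
    by simp
  also have "\<dots> = card ({..<m} \<inter> {u. u < k})" by (simp add: sum.If_cases)
  also have "{..<m} \<inter> {u. u < k} = {..<k}" using assms by auto
  finally show ?thesis by simp
qed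

lemma count_mod_mult:
  assumes "0 < m" "k \<le> m"
  shows "(\<Sum>t<q * m. if (c + t) mod m < k then 1 else 0) = (k::nat) * q"
proof (induction q)
  case 0 then show ?case by simp
next
  case (Suc q)
  have "(\<Sum>t<Suc q * m. if (c + t) mod m < k then 1 else (0::nat)) =
     (\<Sum>t\<in>{0..<q*m}. if (c + t) mod m < k then 1 else 0) + (\<Sum>t\<in>{q*m..<m + q*m}. if (c + t) mod m < k then 1 else 0)"
    by (simp add: sum.atLeastLessThan_concat lessThan_atLeast0 add.commute)
  also have "(\<Sum>t\<in>{q*m..<m + q*m}. if (c + t) mod m < k then 1 else (0::nat)) = (\<Sum>t\<in>{0..<m}. if (c + (t + q*m)) mod m < k then 1 else 0)"
    using sum.shift_bounds_nat_ivl[of _ 0 "q*m" m] by simp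
  also have "\<dots> = (\<Sum>t<m. if (c + t) mod m < k then 1 else 0)"
    by (simp add: lessThan_atLeast0 add.assoc[symmetric])
  also have "\<dots> = k" by (rule count_mod[OF assms])
  finally show ?case using Suc by (simp add: lessThan_atLeast0)
qed



lemma worb_props:
  assumes "w \<in> Worb n \<mu>" "\<mu> \<in> vec n" "\<forall>i<n. \<mu> i = a \<or> \<mu> i = a + 1"
  shows "w \<in> vec n" "\<forall>i<n. w i = a \<or> w i = a + 1" "(\<Sum>i<n. w i) = (\<Sum>i<n. \<mu> i)"
proof -
  obtain \<sigma> where s: "\<sigma> permutes {..<n}" "w = \<mu> \<circ> \<sigma>" using assms(1) by (auto simp: Worb_def)
  show "w \<in> vec n" using s assms(2) by (auto simp: vec_def permutes_not_in)
  show "\<forall>i<n. w i = a \<or> w i = a + 1"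
  proof (intro allI impI)
    fix i assume "i < n"
    then have "\<sigma> i < n" using permutes_in_image[OF s(1)] by simp
    then show "w i = a \<or> w i = a + 1" using s(2) assms(3) by simp
  qed
  show "(\<Sum>i<n. w i) = (\<Sum>i<n. \<mu> i)"
    using sum.reindex_bij_betw[OF permutes_imp_bij[OF s(1)], of \<mu>] s(2) by simp
qed

lemma sum_two_vals:
  assumes "\<forall>i<n. w i = a \<or> w i = a + (1::int)"
  shows "(\<Sum>i<n. w i) = int n * a + int (card {i. i < n \<and> w i = a + 1})"
proof -
  have "(\<Sum>i<n. w i) = (\<Sum>i<n. a + (if w i = a + 1 then 1 else 0))"
    using assms by (intro sum.cong) auto
  also have "\<dots> = int n * a + (\<Sum>i<n. if w i = a + 1 then 1 else 0)"
    by (simp add: sum.distrib)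
  also have "(\<Sum>i<n. if w i = a + 1 then 1 else 0) = int (card {i. i < n \<and> w i = a + 1})"
    by (simp add: sum.If_cases Int_def)
  finally show ?thesis .
qed

lemma worb_char:
  assumes "\<mu> \<in> vec n" "\<forall>i<n. \<mu> i = a \<or> \<mu> i = a + 1"
    and "w \<in> vec n" "\<forall>i<n. w i = a \<or> w i = a + 1" "(\<Sum>i<n. w i) = (\<Sum>i<n. \<mu> i)"
  shows "w \<in> Worb n \<mu>"
proof -
  define A where "A = {i. i < n \<and> w i = a + 1}"
  define B where "B = {i. i < n \<and> \<mu> i = a + 1}"
  have cA: "card A = card B"
    using sum_two_vals[OF assms(4)] sum_two_vals[OF assms(2)] assms(5) by (simp add: A_def B_def)
  have AB: "A \<subseteq> {..<n}" "B \<subseteq> {..<n}" by (auto simp: A_def B_def)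
  have fin: "finite A" "finite B" using AB finite_subset by blast+
  have cA': "card ({..<n} - A) = card ({..<n} - B)"
    using AB cA fin by (simp add: card_Diff_subset)
  obtain f where f: "bij_betw f A B" using finite_same_card_bij[OF fin cA] by blast
  obtain g where g: "bij_betw g ({..<n} - A) ({..<n} - B)"
    using finite_same_card_bij[OF _ _ cA'] by blast
  define \<sigma> where "\<sigma> i = (if i \<in> A then f i else if i < n then g i else i)" for i
  have b1: "bij_betw \<sigma> A B" using f by (rule bij_betw_cong[THEN iffD1, rotated]) (simp add: \<sigma>_def)
  have b2: "bij_betw \<sigma> ({..<n} - A) ({..<n} - B)" using g
    by (rule bij_betw_cong[THEN iffD1, rotated]) (simp add: \<sigma>_def)
  have "bij_betw \<sigma> (A \<union> ({..<n} - A)) (B \<union> ({..<n} - B))"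
    by (rule bij_betw_combine[OF b1 b2]) auto
  moreover have "A \<union> ({..<n} - A) = {..<n}" "B \<union> ({..<n} - B) = {..<n}" using AB by auto
  ultimately have "bij_betw \<sigma> {..<n} {..<n}" by simp
  then have p: "\<sigma> permutes {..<n}"
    by (rule bij_imp_permutes) (auto simp: \<sigma>_def A_def)
  have "w = \<mu> \<circ> \<sigma>"
  proof
    fix i
    show "w i = (\<mu> \<circ> \<sigma>) i"
    proof (cases "i < n")
      case False
      then show ?thesis using assms(1,3) p by (simp add: vec_def permutes_not_in)
    next
      case True
      show ?thesis
      proof (cases "i \<in> A")
        case True
        then have "\<sigma> i \<in> B" using b1 by (auto simp: bij_betw_def)
        then show ?thesis using True by (simp add: A_def B_def)
      next
        case False
        then have "\<sigma> i \<in> {..<n} - B" using b2 \<open>i < n\<close> by (auto simp: bij_betw_def)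
        then show ?thesis using False \<open>i < n\<close> assms(2,4) by (auto simp: A_def B_def)
      qed
    qed
  qed
  then show ?thesis using p by (auto simp: Worb_def)
qed

lemma conv_avg:
  assumes "0 < L" "\<And>t. t < L \<Longrightarrow> f t \<in> S"
  shows "(\<lambda>i. (\<Sum>t<L. f t i) / real L) \<in> Conv S"
proof -
  define F where "F = f ` {..<L}"
  define c where "c s = real (card {t. t \<in> {..<L} \<and> f t = s}) / real L" for s
  have "sum c F = (\<Sum>s\<in>F. real (card {t. t \<in> {..<L} \<and> f t = s})) / real L"
    by (simp add: c_def sum_divide_distrib)
  also have "(\<Sum>s\<in>F. real (card {t. t \<in> {..<L} \<and> f t = s})) = (\<Sum>s\<in>F. \<Sum>t\<in>{t. t \<in> {..<L} \<and> f t = s}. 1)"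
    by simp
  also have "\<dots> = (\<Sum>t<L. 1)"
    unfolding F_def by (rule sum.image_gen[symmetric]) simp
  finally have c1: "sum c F = 1" using assms(1) by simp
  have v: "(\<Sum>t<L. f t i) / real L = (\<Sum>s\<in>F. c s * s i)" for i
  proof -
    have "(\<Sum>t<L. f t i) = (\<Sum>s\<in>F. \<Sum>t\<in>{t. t \<in> {..<L} \<and> f t = s}. f t i)"
      unfolding F_def by (rule sum.image_gen) simp
    also have "\<dots> = (\<Sum>s\<in>F. real (card {t. t \<in> {..<L} \<and> f t = s}) * s i)"
      by (intro sum.cong) auto
    finally show ?thesis by (simp add: c_def sum_divide_distrib)
  qed
  show ?thesis unfolding Conv_def
    apply (rule CollectI)
    apply (rule exI[of _ F], rule exI[of _ c])
    using c1 v assms(2) by (auto simp: F_def c_def)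
qed



definition Wt :: "(nat \<Rightarrow> nat) \<Rightarrow> nat \<Rightarrow> int \<Rightarrow> (nat \<Rightarrow> nat) \<Rightarrow> nat \<Rightarrow> nat \<Rightarrow> int" where
  "Wt m r a k t i = (\<Sum>j<r. if i \<in> blk m j then a + (if (i - sum m {..<j} + t) mod m j < k j then 1 else 0) else 0)"

lemma Wt_in: "i \<in> blk m j \<Longrightarrow> j < r \<Longrightarrow> Wt m r a k t i = a + (if (i - sum m {..<j} + t) mod m j < k j then 1 else 0)"
  unfolding Wt_def by (rule blk_delta)

lemma Wt_out: "sum m {..<r} \<le> i \<Longrightarrow> Wt m r a k t i = 0"
  unfolding Wt_def by (rule blk_none)

lemma int_count: "(\<Sum>s\<in>A. if P s then 1 else 0 :: int) = int (\<Sum>s\<in>A. if P s then 1 else 0)"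
  by (auto simp: of_nat_sum intro!: sum.cong)

lemma real_count: "(\<Sum>s\<in>A. if P s then 1 else 0 :: real) = real (\<Sum>s\<in>A. if P s then 1 else 0)"
  by (auto simp: of_nat_sum intro!: sum.cong)

lemma Wt_blksum:
  assumes "j < r" "0 < m j" "k j \<le> m j"
  shows "sum (Wt m r a k t) (blk m j) = int (m j) * a + int (k j)"
proof -
  let ?st = "sum m {..<j}"
  have "sum (Wt m r a k t) (blk m j) = (\<Sum>i\<in>blk m j. a + (if (i - ?st + t) mod m j < k j then 1 else 0))"
    using assms Wt_in by (intro sum.cong) auto
  also have "\<dots> = int (m j) * a + (\<Sum>i\<in>blk m j. if (i - ?st + t) mod m j < k j then 1 else 0)"
    by (simp add: sum.distrib card_blk)
  also have "(\<Sum>i\<in>blk m j. if (i - ?st + t) mod m j < k j then 1 else 0) = int (\<Sum>i\<in>{0 + ?st..<m j + ?st}. if (i - ?st + t) mod m j < k j then 1 else 0)"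
    by (simp add: blk_eq int_count add.commute)
  also have "(\<Sum>i\<in>{0 + ?st..<m j + ?st}. if (i - ?st + t) mod m j < k j then 1 else (0::nat)) = (\<Sum>s\<in>{0..<m j}. if (t + s) mod m j < k j then 1 else 0)"
    by (subst sum.shift_bounds_nat_ivl) (simp add: add.commute)
  also have "\<dots> = k j" using count_mod[OF assms(2,3)] by (simp add: lessThan_atLeast0)
  finally show ?thesis .
qed

lemma Wt_avg:
  assumes "j < r" "0 < m j" "k j \<le> m j" "i \<in> blk m j" "m j dvd L"
  shows "(\<Sum>t<L. real_of_int (Wt m r a k t i)) = real L * a + real (k j * (L div m j))"
proof -
  let ?c = "i - sum m {..<j}"
  have "(\<Sum>t<L. real_of_int (Wt m r a k t i)) = (\<Sum>t<L. real_of_int a + (if (?c + t) mod m j < k j then 1 else 0::real))"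
    using assms Wt_in by (intro sum.cong) auto
  also have "\<dots> = real L * a + (\<Sum>t<L. if (?c + t) mod m j < k j then 1 else 0::real)"
    by (simp add: sum.distrib)
  also have "(\<Sum>t<L. if (?c + t) mod m j < k j then 1 else 0 :: real) = real (\<Sum>t<(L div m j) * m j. if (?c + t) mod m j < k j then 1 else 0)"
    using assms(5) by (simp add: real_count)
  also have "(\<Sum>t<(L div m j) * m j. if (?c + t) mod m j < k j then 1 else 0) = k j * (L div m j)"
    by (rule count_mod_mult[OF assms(2,3)])
  finally show ?thesis .
qed



lemma kappa_blk: "kappaM m r v = x \<Longrightarrow> j < r \<Longrightarrow> sum v (blk m j) = x j"
  by (auto simp: kappaM_def)

theorem lemma4p7:
  fixes n r :: nat and m :: "nat \<Rightarrow> nat" and \<mu> x :: "nat \<Rightarrow> int"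
  assumes m_pos: "\<forall>j<r. 0 < m j"
    and m_sum: "(\<Sum>j<r. m j) = n"
    and mu_vec: "\<mu> \<in> vec n"
    and mu_dom: "dominant n \<mu>"
    and mu_min: "minuscule n \<mu>"
    and x_pi1: "x \<in> vec r"
  shows "(x \<in> kappaM m r ` Worb n \<mu> \<longleftrightarrow>
          (THE \<nu>. \<nu> \<in> XM_Q m r n \<and> kappaM m r \<nu> = to_real x) \<in> Conv (to_real ` Worb n \<mu>))
       \<and> (x \<in> kappaM m r ` Worb n \<mu> \<longrightarrow>
          (\<forall>\<nu>t. \<nu>t \<in> vec n \<and> M_dominant m r \<nu>t \<and> M_minuscule m r \<nu>t \<and> kappaM m r \<nu>t = x
                 \<longrightarrow> \<nu>t \<in> Worb n \<mu>))"
proof -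
  define a where "a = \<mu> (n - 1)"
  have hmu: "\<forall>i<n. \<mu> i = a \<or> \<mu> i = a + 1"
  proof (intro allI impI)
    fix i assume i: "i < n"
    have le: "a \<le> \<mu> i" using mu_dom i unfolding dominant_def a_def by auto
    show "\<mu> i = a \<or> \<mu> i = a + 1"
    proof (cases "i = n - 1")
      case True then show ?thesis by (simp add: a_def)
    next
      case False
      then have "\<mu> i - a \<in> {0, 1, -1}" using mu_min i unfolding minuscule_def a_def by auto
      then show ?thesis using le by auto
    qed
  qed
  have nsum: "sum m {..<r} = n" using m_sum by simp
  have blk_lt: "\<And>j i. j < r \<Longrightarrow> i \<in> blk m j \<Longrightarrow> i < n"
    using blk_sub nsum by fastforce
  have sumb: "\<And>f. sum f {..<n} = (\<Sum>j<r. sum f (blk m j))"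
    using sum_blocks[of _ m r] nsum by simp
  have xout: "\<And>j. r \<le> j \<Longrightarrow> x j = 0" using x_pi1 by (simp add: vec_def)
  define Bc where "Bc \<longleftrightarrow> (\<forall>j<r. a * int (m j) \<le> x j \<and> x j \<le> (a + 1) * int (m j))
       \<and> (\<Sum>j<r. x j) = (\<Sum>i<n. \<mu> i)"
  have i_B: "Bc" if xi0: "x \<in> kappaM m r ` Worb n \<mu>"
  proof -
    obtain w where w: "w \<in> Worb n \<mu>" "x = kappaM m r w" using xi0 by blast
    note wp = worb_props[OF w(1) mu_vec hmu]
    have "a * int (m j) \<le> x j \<and> x j \<le> (a + 1) * int (m j)" if j: "j < r" for j
    proof -
      have xj: "x j = sum w (blk m j)" using kappa_blk[OF w(2)[symmetric] j] by simp
      have b: "\<forall>i\<in>blk m j. a \<le> w i \<and> w i \<le> a + 1" using wp(2) blk_lt[OF j] by force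
      have "of_nat (card (blk m j)) * a \<le> sum w (blk m j)"
        using b by (intro sum_bounded_below) auto
      moreover have "sum w (blk m j) \<le> of_nat (card (blk m j)) * (a + 1)"
        using b by (intro sum_bounded_above) auto
      ultimately show ?thesis using xj by (simp add: card_blk mult.commute)
    qed
    moreover have "(\<Sum>j<r. x j) = (\<Sum>i<n. \<mu> i)"
    proof -
      have "(\<Sum>j<r. x j) = (\<Sum>j<r. sum w (blk m j))"
        using kappa_blk[OF w(2)[symmetric]] by (intro sum.cong) auto
      also have "\<dots> = sum w {..<n}" using sumb[of w] by simp
      finally show ?thesis using wp(3) by simp
    qed
    ultimately show ?thesis unfolding Bc_def by blast
  qed
  define \<nu>0 where "\<nu>0 i = (\<Sum>j<r. if i \<in> blk m j then real_of_int (x j) / real (m j) else 0)" for i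
  have nu_in: "\<And>i j. j < r \<Longrightarrow> i \<in> blk m j \<Longrightarrow> \<nu>0 i = real_of_int (x j) / real (m j)"
    unfolding \<nu>0_def by (rule blk_delta)
  have nu_out: "\<And>i. n \<le> i \<Longrightarrow> \<nu>0 i = 0"
    unfolding \<nu>0_def using blk_none[of m r] nsum by simp
  have find_blk: "\<And>i. i < n \<Longrightarrow> \<exists>j<r. i \<in> blk m j" using in_some_blk nsum by simp
  have spec: "\<nu>0 \<in> XM_Q m r n \<and> kappaM m r \<nu>0 = to_real x"
  proof
    show "\<nu>0 \<in> XM_Q m r n"
      unfolding XM_Q_def vec_def
      using nu_out nu_in by (auto simp: \<nu>0_def)
    show "kappaM m r \<nu>0 = to_real x"
    proof
      fix j
      show "kappaM m r \<nu>0 j = to_real x j"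
      proof (cases "j < r")
        case True
        have "sum \<nu>0 (blk m j) = (\<Sum>i\<in>blk m j. real_of_int (x j) / real (m j))"
          using nu_in True by (intro sum.cong) auto
        also have "\<dots> = real_of_int (x j)" using m_pos True by (simp add: card_blk)
        finally show ?thesis using True by (simp add: kappaM_def to_real_def)
      next
        case False then show ?thesis by (simp add: kappaM_def to_real_def xout)
      qed
    qed
  qed
  have uniq: "\<nu> = \<nu>0" if "\<nu> \<in> XM_Q m r n \<and> kappaM m r \<nu> = to_real x" for \<nu>
  proof
    fix i
    show "\<nu> i = \<nu>0 i"
    proof (cases "i < n")
      case False
      have "\<nu> \<in> vec n" using that unfolding XM_Q_def by blast
      then show ?thesis using False nu_out by (simp add: vec_def)
    next
      case True
      then obtain j where j: "j < r" "i \<in> blk m j" using find_blk by blast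
      have cst: "\<forall>j<r. \<forall>i\<in>blk m j. \<forall>i'\<in>blk m j. \<nu> i = \<nu> i'"
        using that unfolding XM_Q_def by blast
      have c: "\<forall>i'\<in>blk m j. \<nu> i' = \<nu> i" using cst j by blast
      have kk: "kappaM m r \<nu> = to_real x" using that by simp
      have "real_of_int (x j) = sum \<nu> (blk m j)"
        using fun_cong[OF kk, of j] j by (simp add: kappaM_def to_real_def)
      also have "\<dots> = real (m j) * \<nu> i" using c by (simp add: card_blk)
      finally show ?thesis using nu_in[OF j] m_pos j by (simp add: field_simps)
    qed
  qed
  have THE_eq: "(THE \<nu>. \<nu> \<in> XM_Q m r n \<and> kappaM m r \<nu> = to_real x) = \<nu>0"
    apply (rule the_equality)
     apply (rule spec)
    apply (erule uniq)
    done
  have ii_B: "Bc" if cv0: "\<nu>0 \<in> Conv (to_real ` Worb n \<mu>)"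
  proof -
    obtain F c where F: "finite F" "F \<subseteq> to_real ` Worb n \<mu>" "\<forall>s\<in>F. 0 \<le> c s" "sum c F = 1"
      "\<nu>0 = (\<lambda>i. \<Sum>s\<in>F. c s * s i)"
      using cv0 unfolding Conv_def by blast
    have sF: "\<forall>i<n. real_of_int a \<le> s i \<and> s i \<le> real_of_int a + 1" "(\<Sum>i<n. s i) = real_of_int (\<Sum>i<n. \<mu> i)"
      if "s \<in> F" for s
    proof -
      obtain w where w: "w \<in> Worb n \<mu>" "s = to_real w" using F(2) \<open>s \<in> F\<close> by blast
      note wp = worb_props[OF w(1) mu_vec hmu]
      show "\<forall>i<n. real_of_int a \<le> s i \<and> s i \<le> real_of_int a + 1"
        using wp(2) w(2) by (force simp: to_real_def)
      show "(\<Sum>i<n. s i) = real_of_int (\<Sum>i<n. \<mu> i)"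
        using wp(3) w(2) by (simp add: to_real_def flip: of_int_sum)
    qed
    have lo: "real_of_int a \<le> \<nu>0 i" and hi: "\<nu>0 i \<le> real_of_int a + 1" if "i < n" for i
    proof -
      have "(\<Sum>s\<in>F. c s * real_of_int a) \<le> (\<Sum>s\<in>F. c s * s i)"
        using sF(1) F(3) that by (intro sum_mono mult_left_mono) auto
      then show "real_of_int a \<le> \<nu>0 i" using F(4,5) by (simp add: sum_distrib_right[symmetric])
      have "(\<Sum>s\<in>F. c s * s i) \<le> (\<Sum>s\<in>F. c s * (real_of_int a + 1))"
        using sF(1) F(3) that by (intro sum_mono mult_left_mono) auto
      then show "\<nu>0 i \<le> real_of_int a + 1" using F(4,5) by (simp add: sum_distrib_right[symmetric])
    qed
    have tot: "(\<Sum>i<n. \<nu>0 i) = real_of_int (\<Sum>i<n. \<mu> i)"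
    proof -
      have "(\<Sum>i<n. \<nu>0 i) = (\<Sum>s\<in>F. c s * (\<Sum>i<n. s i))"
        using F(5) by (simp add: sum.swap[of _ F] sum_distrib_left)
      also have "\<dots> = (\<Sum>s\<in>F. c s * real_of_int (\<Sum>i<n. \<mu> i))"
        using sF(2) by (intro sum.cong) auto
      also have "\<dots> = real_of_int (\<Sum>i<n. \<mu> i)" using F(4) by (simp add: sum_distrib_right[symmetric])
      finally show ?thesis .
    qed
    have "a * int (m j) \<le> x j \<and> x j \<le> (a + 1) * int (m j)" if j: "j < r" for j
    proof -
      have "sum m {..<j} \<in> blk m j" using m_pos j by (simp add: blk_eq)
      then have "\<nu>0 (sum m {..<j}) = real_of_int (x j) / real (m j)"
        and lt: "sum m {..<j} < n" using nu_in[OF j] blk_lt[OF j] by auto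
      then have "real_of_int a \<le> real_of_int (x j) / real (m j)" "real_of_int (x j) / real (m j) \<le> real_of_int a + 1"
        using lo[OF lt] hi[OF lt] by auto
      then have "real_of_int a * real (m j) \<le> real_of_int (x j)" "real_of_int (x j) \<le> (real_of_int a + 1) * real (m j)"
        using m_pos j by (simp_all add: field_simps)
      then have "real_of_int (a * int (m j)) \<le> real_of_int (x j)" "real_of_int (x j) \<le> real_of_int ((a + 1) * int (m j))"
        by simp_all
      then show ?thesis by (simp only: of_int_le_iff)
    qed
    moreover have "(\<Sum>j<r. x j) = (\<Sum>i<n. \<mu> i)"
    proof -
      have "(\<Sum>i<n. \<nu>0 i) = (\<Sum>j<r. sum \<nu>0 (blk m j))" by (rule sumb)
      also have "\<dots> = (\<Sum>j<r. real_of_int (x j))"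
        using kappa_blk[OF spec[THEN conjunct2]] by (intro sum.cong) (auto simp: to_real_def)
      finally show ?thesis using tot by (simp flip: of_int_sum)
    qed
    ultimately show ?thesis unfolding Bc_def by blast
  qed
  define k where "k j = nat (x j - a * int (m j))" for j
  have B_W: "Wt m r a k t \<in> Worb n \<mu> \<and> kappaM m r (Wt m r a k t) = x" if B: Bc for t
  proof -
    have kx: "\<And>j. j < r \<Longrightarrow> int (m j) * a + int (k j) = x j \<and> k j \<le> m j"
      using B unfolding Bc_def k_def by (auto simp: algebra_simps)
    have bs: "\<And>j. j < r \<Longrightarrow> sum (Wt m r a k t) (blk m j) = x j"
      using Wt_blksum m_pos kx by metis
    have v: "Wt m r a k t \<in> vec n" using Wt_out nsum by (simp add: vec_def)
    have e: "\<forall>i<n. Wt m r a k t i = a \<or> Wt m r a k t i = a + 1"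
    proof (intro allI impI)
      fix i assume "i < n"
      then obtain j where "j < r" "i \<in> blk m j" using find_blk by blast
      then show "Wt m r a k t i = a \<or> Wt m r a k t i = a + 1" using Wt_in by simp
    qed
    have "(\<Sum>i<n. Wt m r a k t i) = (\<Sum>j<r. sum (Wt m r a k t) (blk m j))" by (rule sumb)
    also have "\<dots> = (\<Sum>j<r. x j)" using bs by simp
    finally have "(\<Sum>i<n. Wt m r a k t i) = (\<Sum>j<r. x j)" .
    then have "Wt m r a k t \<in> Worb n \<mu>"
      using worb_char[OF mu_vec hmu v e] B unfolding Bc_def by simp
    moreover have "kappaM m r (Wt m r a k t) = x"
      using bs xout by (auto simp: kappaM_def)
    ultimately show ?thesis by blast
  qed
  have B_i: "x \<in> kappaM m r ` Worb n \<mu>" if Bc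
    using B_W[OF that, of 0] by (metis image_eqI)
  have B_ii: "\<nu>0 \<in> Conv (to_real ` Worb n \<mu>)" if B: Bc
  proof -
    define L where "L = (\<Prod>j<r. m j)"
    have Lpos: "0 < L" using m_pos by (simp add: L_def)
    have kx: "\<And>j. j < r \<Longrightarrow> int (m j) * a + int (k j) = x j \<and> k j \<le> m j"
      using B unfolding Bc_def k_def by (auto simp: algebra_simps)
    have "(\<lambda>i. (\<Sum>t<L. to_real (Wt m r a k t) i) / real L) \<in> Conv (to_real ` Worb n \<mu>)"
      using B_W[OF B] Lpos by (intro conv_avg) auto
    moreover have "(\<lambda>i. (\<Sum>t<L. to_real (Wt m r a k t) i) / real L) = \<nu>0"
    proof
      fix i
      show "(\<Sum>t<L. to_real (Wt m r a k t) i) / real L = \<nu>0 i"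
      proof (cases "i < n")
        case False
        then show ?thesis using nu_out Wt_out nsum by (simp add: to_real_def)
      next
        case True
        then obtain j where j: "j < r" "i \<in> blk m j" using find_blk by blast
        have dv: "m j dvd L" unfolding L_def using j by (intro dvd_prodI) auto
        have mj: "0 < m j" using m_pos j by simp
        define S where "S = (\<Sum>t<L. to_real (Wt m r a k t) i)"
        have h1: "S = real L * a + real (k j) * real (L div m j)"
          unfolding S_def
          using Wt_avg[where m=m and k=k and a=a and r=r and L=L and i=i and j=j, OF j(1) mj kx[OF j(1), THEN conjunct2] j(2) dv] by (simp add: to_real_def)
        have h2: "real (L div m j) = real L / real (m j)" using dv mj
          by (simp add: real_of_nat_div)
        have h3: "real_of_int (x j) = real (m j) * a + real (k j)"
          using kx[OF j(1)] by (metis of_int_add of_int_mult of_int_of_nat_eq)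
        have "\<nu>0 i = real_of_int a + real (k j) / real (m j)"
          using nu_in[OF j] h3 mj by (simp add: field_simps)
        then have "S / real L = \<nu>0 i" using h1 h2 Lpos by (simp add: field_simps)
        then show ?thesis unfolding S_def .
      qed
    qed
    ultimately show ?thesis by simp
  qed
  have part1: "x \<in> kappaM m r ` Worb n \<mu> \<longleftrightarrow> \<nu>0 \<in> Conv (to_real ` Worb n \<mu>)"
    using i_B ii_B B_i B_ii by blast
  have part2: "\<nu>t \<in> Worb n \<mu>"
    if xi: "x \<in> kappaM m r ` Worb n \<mu>" and nt: "\<nu>t \<in> vec n" "M_minuscule m r \<nu>t" "kappaM m r \<nu>t = x" for \<nu>t
  proof -
    have B: Bc using i_B xi .
    have e: "\<forall>i<n. \<nu>t i = a \<or> \<nu>t i = a + 1"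
    proof (intro allI impI)
      fix i assume "i < n"
      then obtain j where j: "j < r" "i \<in> blk m j" using find_blk by blast
      have xj: "sum \<nu>t (blk m j) = x j" using kappa_blk[OF nt(3) j(1)] .
      have near: "\<forall>i'\<in>blk m j. \<nu>t i' - \<nu>t i \<in> {0, 1, -1}"
        using nt(2) j unfolding M_minuscule_def by force
      have fin: "finite (blk m j)" by (simp add: blk_eq)
      have split: "sum \<nu>t (blk m j) = \<nu>t i + sum \<nu>t (blk m j - {i})"
        using j(2) fin by (simp add: sum.remove)
      have cd: "card (blk m j - {i}) = m j - 1" using j(2) fin by (simp add: card_blk)
      have mj: "1 \<le> m j" using m_pos j by (simp add: Suc_le_eq)
      have Bj: "a * int (m j) \<le> x j" "x j \<le> (a + 1) * int (m j)" using B j unfolding Bc_def by auto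
      have "\<not> a + 2 \<le> \<nu>t i"
      proof
        assume h: "a + 2 \<le> \<nu>t i"
        have "of_nat (card (blk m j - {i})) * (a + 1) \<le> sum \<nu>t (blk m j - {i})"
          using near h by (intro sum_bounded_below) force
        then have "int (m j - 1) * (a + 1) + (a + 2) \<le> x j" using split xj cd h by simp
        then show False using Bj mj by (simp add: of_nat_diff algebra_simps)
      qed
      moreover have "\<not> \<nu>t i \<le> a - 1"
      proof
        assume h: "\<nu>t i \<le> a - 1"
        have "sum \<nu>t (blk m j - {i}) \<le> of_nat (card (blk m j - {i})) * a"
          using near h by (intro sum_bounded_above) force
        then have "x j \<le> int (m j - 1) * a + (a - 1)" using split xj cd h by simp
        then show False using Bj mj by (simp add: of_nat_diff algebra_simps)
      qed
      ultimately show "\<nu>t i = a \<or> \<nu>t i = a + 1" by auto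
    qed
    have "(\<Sum>i<n. \<nu>t i) = (\<Sum>j<r. sum \<nu>t (blk m j))" by (rule sumb)
    also have "\<dots> = (\<Sum>j<r. x j)" using kappa_blk[OF nt(3)] by simp
    finally have "(\<Sum>i<n. \<nu>t i) = (\<Sum>j<r. x j)" .
    then show ?thesis using worb_char[OF mu_vec hmu nt(1) e] B unfolding Bc_def by simp
  qed
  show ?thesis using part1 part2 THE_eq by auto
qed


end
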